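(* For every $n\ge 1$, the linear complexity of $(r_0,r_1,\ldots,r_{n-1})$ over $\mathrm{GF}(2)$ equals $\lfloor (n+1)/2\rfloor$; equivalently, the sequence $(r_0,r_1,\ldots)$ has a perfect linear complexity profile.
   Context: $(r_0,r_1,\ldots)$ is the binary sequence with $r_i=1$ if $i=2^j-1$ for some $j\ge 0$ and $r_i=0$ otherwise. A monic $c\in\mathrm{GF}(2)[x]$ of degree $l$ is a characteristic polynomial of $(s_0,\ldots,s_{n-1})$ if either $l\ge n$ or $c_ls_{k+l}+\cdots+c_0s_k=0$ for all $0\le k\le n-l-1$; the linear complexity of $(s_0,\ldots,s_{n-1})$ is the minimal degree of a characteristic polynomial. *)

theory Defs
  imports "HOL-Computational_Algebra.Polynomial" "HOL-Library.Z2"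
begin

definition r_seq :: "nat \<Rightarrow> bit" where
  "r_seq i = (if \<exists>j. i = 2 ^ j - 1 then 1 else 0)"

definition is_char_poly :: "'a::field poly \<Rightarrow> (nat \<Rightarrow> 'a) \<Rightarrow> nat \<Rightarrow> bool" where
  "is_char_poly c s n \<longleftrightarrow>
     lead_coeff c = 1 \<and>
     (degree c \<ge> n \<or>
      (\<forall>k. k + degree c + 1 \<le> n \<longrightarrow> (\<Sum>i\<le>degree c. coeff c i * s (k + i)) = 0))"

definition linear_complexity :: "(nat \<Rightarrow> 'a::field) \<Rightarrow> nat \<Rightarrow> nat" where
  "linear_complexity s n = (LEAST l. \<exists>c. is_char_poly c s n \<and> degree c = l)"

end

theory Submission imports Defs begin

lemma bit11: "(1::bit) + 1 = 0" by (simp flip: one_add_one)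

lemma r0: "r_seq 0 = 1"
  unfolding r_seq_def by (rule if_P) (rule exI[of _ 0], simp)

lemma r_even: "r_seq (2*j+2) = 0"
proof -
  have "\<not> (\<exists>k. 2*j+2 = (2::nat)^k - 1)"
  proof
    assume "\<exists>k. 2*j+2 = (2::nat)^k - 1"
    then obtain k where k: "2*j+2 = (2::nat)^k - 1" by blast
    show False
    proof (cases k)
      case 0 then show ?thesis using k by simp
    next
      case (Suc k') 
      then have "(2::nat)^k = 2*2^k'" by simp
      moreover have "(2::nat)^k' \<ge> 1" by simp
      ultimately show ?thesis using k by presburger
    qed
  qed
  then show ?thesis unfolding r_seq_def by simp
qed

lemma r_odd: "r_seq (2*j+1) = r_seq j"
proof -
  have "(\<exists>k. 2*j+1 = (2::nat)^k - 1) \<longleftrightarrow> (\<exists>k. j = (2::nat)^k - 1)"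
  proof
    assume "\<exists>k. 2*j+1 = (2::nat)^k - 1"
    then obtain k where k: "2*j+1 = (2::nat)^k - 1" by blast
    show "\<exists>k. j = (2::nat)^k - 1"
    proof (cases k)
      case 0 then show ?thesis using k by simp
    next
      case (Suc k') 
      then have "(2::nat)^k = 2*2^k'" by simp
      moreover have "(2::nat)^k' \<ge> 1" by simp
      ultimately have "j = 2^k' - 1" using k by presburger
      then show ?thesis by blast
    qed
  next
    assume "\<exists>k. j = (2::nat)^k - 1"
    then obtain k where k: "j = (2::nat)^k - 1" by blast
    have "(2::nat)^k \<ge> 1" by simp
    then have "2*j+1 = 2*2^k - 1" using k by arith
    then have "2*j+1 = 2^(Suc k) - 1" by simp
    then show "\<exists>k. 2*j+1 = (2::nat)^k - 1" by blast
  qed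
  then show ?thesis unfolding r_seq_def by simp
qed

definition D :: "(nat \<Rightarrow> bit) \<Rightarrow> nat \<Rightarrow> bit" where
  "D f k = (\<Sum>i\<in>{i. f i \<noteq> 0}. f i * r_seq (k+i))"

lemma D_eq: assumes "\<forall>i\<ge>n. f i = 0" shows "D f k = (\<Sum>i<n. f i * r_seq (k+i))"
  unfolding D_def
proof (rule sum.mono_neutral_left)
  show "{i. f i \<noteq> 0} \<subseteq> {..<n}" using assms by (auto simp: not_less[symmetric])
qed auto

definition cmb :: "(nat \<Rightarrow> bit) \<Rightarrow> (nat \<Rightarrow> bit) \<Rightarrow> nat \<Rightarrow> bit" where
  "cmb f h i = (if even i then f (i div 2) else h (i div 2))"

lemma sum_evod: fixes g :: "nat \<Rightarrow> 'a::comm_monoid_add" and n :: nat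
  shows "(\<Sum>i<2*n. g i) = (\<Sum>j<n. g (2*j)) + (\<Sum>j<n. g (2*j+1))"
  by (induction n) (auto simp: algebra_simps)

lemma cmb_supp: assumes "\<forall>i\<ge>n. f i = 0" "\<forall>i\<ge>n. h i = 0" shows "\<forall>i\<ge>2*n. cmb f h i = 0"
  using assms unfolding cmb_def by auto

lemma D_cmb_split: assumes "\<forall>i\<ge>n. f i = 0" "\<forall>i\<ge>n. h i = 0"
  shows "D (cmb f h) k = (\<Sum>j<n. f j * r_seq (k+2*j)) + (\<Sum>j<n. h j * r_seq (k+(2*j+1)))"
proof -
  have "D (cmb f h) k = (\<Sum>i<2*n. cmb f h i * r_seq (k+i))" by (rule D_eq[OF cmb_supp[OF assms]])
  also have "\<dots> = (\<Sum>j<n. cmb f h (2*j) * r_seq (k+2*j)) + (\<Sum>j<n. cmb f h (2*j+1) * r_seq (k+(2*j+1)))"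
    by (rule sum_evod)
  also have "\<dots> = (\<Sum>j<n. f j * r_seq (k+2*j)) + (\<Sum>j<n. h j * r_seq (k+(2*j+1)))"
    by (intro arg_cong2[where f="(+)"] sum.cong) (auto simp: cmb_def)
  finally show ?thesis .
qed

lemma D_cmb_even: assumes "\<forall>i\<ge>n. f i = 0" "\<forall>i\<ge>n. h i = 0"
  shows "D (cmb f h) (2*a) = (if a = 0 then f 0 else 0) + D h a"
proof -
  have "(\<Sum>j<n. h j * r_seq (2*a+(2*j+1))) = (\<Sum>j<n. h j * r_seq (a+j))"
  proof (rule sum.cong)
    fix j
    have "2*a+(2*j+1) = 2*(a+j)+1" by simp
    then have "r_seq (2*a+(2*j+1)) = r_seq (a+j)" using r_odd[of "a+j"] by metis
    then show "h j * r_seq (2*a+(2*j+1)) = h j * r_seq (a+j)" by (rule arg_cong)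
  qed simp
  also have "\<dots> = D h a" using D_eq[OF assms(2)] by simp
  finally have h1: "(\<Sum>j<n. h j * r_seq (2*a+(2*j+1))) = D h a" .
  have "(\<Sum>j<n. f j * r_seq (2*a+2*j)) = (\<Sum>j<n. if j = 0 then (if a = 0 then f 0 else 0) else 0)"
  proof (rule sum.cong)
    fix j assume "j \<in> {..<n}"
    show "f j * r_seq (2*a+2*j) = (if j = 0 then (if a = 0 then f 0 else 0) else 0)"
    proof (cases "j = 0 \<and> a = 0")
      case True then show ?thesis by (simp add: r0)
    next
      case False
      then have "2*a+2*j = 2*(a+j-1)+2" by auto
      then have "r_seq (2*a+2*j) = 0" using r_even[of "a+j-1"] by metis
      then show ?thesis using False by auto
    qed
  qed simp
  also have "\<dots> = (if a = 0 then f 0 else 0)"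
  proof (cases "n = 0")
    case True then show ?thesis using assms by (simp)
  next
    case False then show ?thesis by (simp add: sum.delta)
  qed
  finally have f1: "(\<Sum>j<n. f j * r_seq (2*a+2*j)) = (if a = 0 then f 0 else 0)" .
  show ?thesis using D_cmb_split[OF assms, of "2*a"] f1 h1 by simp
qed

lemma D_cmb_odd: assumes "\<forall>i\<ge>n. f i = 0" "\<forall>i\<ge>n. h i = 0"
  shows "D (cmb f h) (2*a+1) = D f a"
proof -
  have h1: "(\<Sum>j<n. h j * r_seq (2*a+1+(2*j+1))) = 0"
  proof (rule sum.neutral, rule ballI)
    fix j
    have "2*a+1+(2*j+1) = 2*(a+j)+2" by simp
    then have "r_seq (2*a+1+(2*j+1)) = 0" using r_even[of "a+j"] by metis
    then show "h j * r_seq (2*a+1+(2*j+1)) = 0" by simp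
  qed
  have "(\<Sum>j<n. f j * r_seq (2*a+1+2*j)) = (\<Sum>j<n. f j * r_seq (a+j))"
  proof (rule sum.cong)
    fix j
    have "2*a+1+2*j = 2*(a+j)+1" by simp
    then have "r_seq (2*a+1+2*j) = r_seq (a+j)" using r_odd[of "a+j"] by metis
    then show "f j * r_seq (2*a+1+2*j) = f j * r_seq (a+j)" by (rule arg_cong)
  qed simp
  also have "\<dots> = D f a" using D_eq[OF assms(1)] by simp
  finally have f1: "(\<Sum>j<n. f j * r_seq (2*a+1+2*j)) = D f a" .
  show ?thesis using D_cmb_split[OF assms, of "2*a+1"] f1 h1 by simp
qed


definition okP :: "nat \<Rightarrow> (nat \<Rightarrow> bit) \<Rightarrow> bool" where
  "okP m f \<longleftrightarrow> f m = 1 \<and> (\<forall>i>m. f i = 0) \<and> f 0 = 1 \<and> (\<forall>j<m. D f j = 0) \<and> D f m = 1"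

definition okF :: "nat \<Rightarrow> (nat \<Rightarrow> bit) \<Rightarrow> bool" where
  "okF m h \<longleftrightarrow> h (m-1) = 1 \<and> (\<forall>i\<ge>m. h i = 0) \<and> D h 0 = 1 \<and> (\<forall>j. 1\<le>j \<and> j<m \<longrightarrow> D h j = 0) \<and> D h m = 1"

lemma D_zero: "D (\<lambda>_. 0) k = 0" unfolding D_def by simp

lemma par: fixes k :: nat obtains a where "k = 2*a" | a where "k = 2*a+1"
  by (metis oddE evenE)

lemma step_even:
  assumes t: "t \<ge> 1" and P: "okP t P" and F: "okF t F"
  shows "okP (2*t) (cmb P F)" "okF (2*t) (cmb (\<lambda>_. 0) F)"
proof -
  have sP: "\<forall>i\<ge>t+1. P i = 0" using P unfolding okP_def by auto
  have sF: "\<forall>i\<ge>t+1. F i = 0" using F unfolding okF_def by auto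
  have sZ: "\<forall>i\<ge>t+1. (\<lambda>_. 0::bit) i = 0" by simp
  note E = D_cmb_even[OF sP sF] and O = D_cmb_odd[OF sP sF]
  note E' = D_cmb_even[OF sZ sF] and O' = D_cmb_odd[OF sZ sF]
  have "\<forall>j<2*t. D (cmb P F) j = 0"
  proof (intro allI impI)
    fix j assume j: "j < 2*t"
    show "D (cmb P F) j = 0"
    proof (cases j rule: par)
      case (1 a)
      show ?thesis
      proof (cases "a = 0")
        case True then show ?thesis using 1 E[of a] P F unfolding okP_def okF_def by (simp add: bit11)
      next
        case False then show ?thesis using 1 j E[of a] P F unfolding okP_def okF_def by simp
      qed
    next
      case (2 a) then show ?thesis using j O[of a] P unfolding okP_def by simp
    qed
  qed
  moreover have "\<forall>i>2*t. cmb P F i = 0"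
  proof (intro allI impI)
    fix i assume i: "i > 2*t"
    show "cmb P F i = 0" using i sP F unfolding cmb_def okF_def by (cases i rule: par) auto
  qed
  moreover have "D (cmb P F) (2*t) = 1" using E[of t] t F unfolding okF_def by simp
  ultimately show "okP (2*t) (cmb P F)" using P unfolding okP_def by (simp add: cmb_def)
  have "\<forall>j. 1\<le>j \<and> j<2*t \<longrightarrow> D (cmb (\<lambda>_. 0) F) j = 0"
  proof (intro allI impI)
    fix j assume j: "1\<le>j \<and> j < 2*t"
    show "D (cmb (\<lambda>_. 0) F) j = 0"
    proof (cases j rule: par)
      case (1 a) then show ?thesis using j E'[of a] F unfolding okF_def by simp
    next
      case (2 a) then show ?thesis using O'[of a] D_zero by simp
    qed
  qed
  moreover have "\<forall>i\<ge>2*t. cmb (\<lambda>_. 0) F i = 0"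
  proof (intro allI impI)
    fix i assume i: "i \<ge> 2*t"
    show "cmb (\<lambda>_. 0) F i = 0" using i sF F unfolding cmb_def okF_def by (cases i rule: par) auto
  qed
  moreover have "cmb (\<lambda>_. 0) F (2*t-1) = 1"
  proof -
    have "2*t-1 = 2*(t-1)+1" using t by simp
    then show ?thesis using F unfolding cmb_def okF_def by simp
  qed
  moreover have "D (cmb (\<lambda>_. 0) F) (2*t) = 1" using E'[of t] t F unfolding okF_def by simp
  moreover have "D (cmb (\<lambda>_. 0) F) 0 = 1" using E'[of 0] F unfolding okF_def by simp
  ultimately show "okF (2*t) (cmb (\<lambda>_. 0) F)" unfolding okF_def by simp
qed

lemma step_odd:
  assumes P: "okP t P" and F: "okF (t+1) F"
  shows "okP (2*t+1) (cmb P F)" "okF (2*t+1) (cmb P (\<lambda>_. 0))"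
proof -
  have sP: "\<forall>i\<ge>t+1. P i = 0" using P unfolding okP_def by auto
  have sF: "\<forall>i\<ge>t+1. F i = 0" using F unfolding okF_def by auto
  have sZ: "\<forall>i\<ge>t+1. (\<lambda>_. 0::bit) i = 0" by simp
  note E = D_cmb_even[OF sP sF] and O = D_cmb_odd[OF sP sF]
  note E' = D_cmb_even[OF sP sZ] and O' = D_cmb_odd[OF sP sZ]
  have "\<forall>j<2*t+1. D (cmb P F) j = 0"
  proof (intro allI impI)
    fix j assume j: "j < 2*t+1"
    show "D (cmb P F) j = 0"
    proof (cases j rule: par)
      case (1 a)
      show ?thesis
      proof (cases "a = 0")
        case True then show ?thesis using 1 E[of a] P F unfolding okP_def okF_def by (simp add: bit11)
      next
        case False then show ?thesis using 1 j E[of a] P F unfolding okP_def okF_def by simp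
      qed
    next
      case (2 a) then show ?thesis using j O[of a] P unfolding okP_def by simp
    qed
  qed
  moreover have "\<forall>i>2*t+1. cmb P F i = 0"
  proof (intro allI impI)
    fix i assume i: "i > 2*t+1"
    show "cmb P F i = 0" using i sP sF unfolding cmb_def by (cases i rule: par) auto
  qed
  moreover have "D (cmb P F) (2*t+1) = 1" using O[of t] P unfolding okP_def by simp
  moreover have "cmb P F (2*t+1) = 1" using F unfolding okF_def cmb_def by simp
  ultimately show "okP (2*t+1) (cmb P F)" using P unfolding okP_def by (simp add: cmb_def)
  have "\<forall>j. 1\<le>j \<and> j<2*t+1 \<longrightarrow> D (cmb P (\<lambda>_. 0)) j = 0"
  proof (intro allI impI)
    fix j assume j: "1\<le>j \<and> j < 2*t+1"
    show "D (cmb P (\<lambda>_. 0)) j = 0"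
    proof (cases j rule: par)
      case (1 a) then show ?thesis using j E'[of a] D_zero by simp
    next
      case (2 a) then show ?thesis using j O'[of a] P unfolding okP_def by simp
    qed
  qed
  moreover have "\<forall>i\<ge>2*t+1. cmb P (\<lambda>_. 0) i = 0"
  proof (intro allI impI)
    fix i assume i: "i \<ge> 2*t+1"
    show "cmb P (\<lambda>_. 0) i = 0" using i sP unfolding cmb_def by (cases i rule: par) auto
  qed
  moreover have "cmb P (\<lambda>_. 0) (2*t) = 1" using P unfolding cmb_def okP_def by simp
  moreover have "D (cmb P (\<lambda>_. 0)) (2*t+1) = 1" using O'[of t] P unfolding okP_def by simp
  moreover have "D (cmb P (\<lambda>_. 0)) 0 = 1" using E'[of 0] P D_zero unfolding okP_def by simp
  ultimately show "okF (2*t+1) (cmb P (\<lambda>_. 0))" unfolding okF_def by simp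
qed

lemma r1: "r_seq 1 = 1" using r_odd[of 0] r0 by simp
lemma r2: "r_seq 2 = 0" using r_even[of 0] by (simp add: numeral_2_eq_2)

lemma exists_PF: "(\<exists>f. okP m f) \<and> (m \<ge> 1 \<longrightarrow> (\<exists>h. okF m h))"
proof (induction m rule: less_induct)
  case (less m)
  define P0 where "P0 = (\<lambda>i::nat. if i = 0 then 1 else (0::bit))"
  have sP0: "\<forall>i\<ge>1. P0 i = 0" unfolding P0_def by simp
  have DP0: "D P0 k = r_seq k" for k using D_eq[OF sP0, of k] unfolding P0_def by simp
  have okP0: "okP 0 P0" unfolding okP_def using DP0 r0 by (simp add: P0_def)
  have okF1: "okF 1 P0" unfolding okF_def using DP0 r0 r1 by (simp add: P0_def)
  show ?case
  proof (cases "m \<le> 1")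
    case True
    show ?thesis
    proof (cases "m = 0")
      case True then show ?thesis using okP0 by auto
    next
      case False
      then have m1: "m = 1" using \<open>m \<le> 1\<close> by simp
      have "okP (2*0+1) (cmb P0 P0)" by (rule step_odd(1)) (use okP0 okF1 in simp_all)
      then show ?thesis using m1 okF1 by auto
    qed
  next
    case False
    show ?thesis
    proof (cases m rule: par)
      case (1 t)
      then have t: "t \<ge> 1" "t < m" using False by auto
      obtain P where P: "okP t P" using less t by blast
      obtain F where F: "okF t F" using less t by blast
      show ?thesis using step_even[OF t(1) P F] 1 by blast
    next
      case (2 t)
      then have t: "t \<ge> 1" "t < m" "t+1 < m" using False by auto
      obtain P where P: "okP t P" using less t by blast
      obtain F where F: "okF (t+1) F" using less[of "t+1"] t by auto
      show ?thesis using step_odd[OF P F] 2 by blast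
    qed
  qed
qed


lemma massey:
  fixes c d :: "'a::field poly"
  assumes c1: "is_char_poly c s N" and c2: "\<not> is_char_poly c s (Suc N)"
    and d1: "is_char_poly d s (Suc N)"
  shows "degree d + degree c \<ge> Suc N"
proof (rule ccontr)
  define a where "a = degree c"
  define b where "b = degree d"
  assume "\<not> ?thesis"
  then have ab: "a + b \<le> N" unfolding a_def b_def by simp
  have lc: "lead_coeff c = 1" using c1 unfolding is_char_poly_def by simp
  have ld: "lead_coeff d = 1" and drec: "\<forall>k. k + b + 1 \<le> Suc N \<longrightarrow> (\<Sum>j\<le>b. coeff d j * s (k + j)) = 0"
    using d1 ab unfolding is_char_poly_def b_def by auto
  obtain k where k: "k + a + 1 \<le> Suc N" "(\<Sum>i\<le>a. coeff c i * s (k + i)) \<noteq> 0"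
    using c2 lc unfolding is_char_poly_def a_def by auto
  have crec: "\<forall>k. k + a + 1 \<le> N \<longrightarrow> (\<Sum>i\<le>a. coeff c i * s (k + i)) = 0"
    using c1 ab unfolding is_char_poly_def a_def
    by auto
  have kN: "k + a = N"
  proof (rule ccontr)
    assume "k + a \<noteq> N"
    then have "k + a + 1 \<le> N" using k(1) by simp
    then show False using crec k(2) by blast
  qed
  define M where "M = N - a - b"
  define T where "T = (\<Sum>i\<le>a. \<Sum>j\<le>b. coeff c i * coeff d j * s (M + i + j))"
  have "T = (\<Sum>i\<le>a. coeff c i * (\<Sum>j\<le>b. coeff d j * s ((M + i) + j)))"
    unfolding T_def by (simp add: sum_distrib_left mult.assoc add.assoc)
  also have "\<dots> = 0"
  proof (rule sum.neutral, rule ballI)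
    fix i assume "i \<in> {..a}"
    then have "(M + i) + b + 1 \<le> Suc N" using ab unfolding M_def by auto
    then show "coeff c i * (\<Sum>j\<le>b. coeff d j * s ((M + i) + j)) = 0" using drec by simp
  qed
  finally have T0: "T = 0" .
  have "T = (\<Sum>j\<le>b. coeff d j * (\<Sum>i\<le>a. coeff c i * s ((M + j) + i)))"
    unfolding T_def by (subst sum.swap) (simp add: sum_distrib_left algebra_simps)
  also have "\<dots> = (\<Sum>j\<le>b. if j = b then (\<Sum>i\<le>a. coeff c i * s (k + i)) else 0)"
  proof (rule sum.cong)
    fix j assume j: "j \<in> {..b}"
    show "coeff d j * (\<Sum>i\<le>a. coeff c i * s ((M + j) + i)) = (if j = b then (\<Sum>i\<le>a. coeff c i * s (k + i)) else 0)"
    proof (cases "j = b")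
      case True
      have "M + j = k" using True kN ab unfolding M_def by simp
      then show ?thesis using True ld unfolding b_def by simp
    next
      case False
      then have "(M + j) + a + 1 \<le> N" using j ab unfolding M_def by auto
      then show ?thesis using crec False by simp
    qed
  qed simp
  also have "\<dots> = (\<Sum>i\<le>a. coeff c i * s (k + i))" by simp
  finally show False using T0 k(2) by simp
qed

lemma char_mono: "is_char_poly c s n' \<Longrightarrow> n \<le> n' \<Longrightarrow> is_char_poly c s n"
  unfolding is_char_poly_def by auto

lemma okP_char:
  assumes "okP m f"
  shows "degree (Abs_poly f) = m" "n \<le> 2*m \<Longrightarrow> is_char_poly (Abs_poly f) r_seq n"
    "\<not> is_char_poly (Abs_poly f) r_seq (Suc (2*m))"
proof -
  have fin: "\<forall>\<^sub>\<infinity> i. f i = 0"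
    using assms unfolding okP_def MOST_nat by blast
  have co: "coeff (Abs_poly f) = f" using fin by (simp add: Abs_poly_inverse)
  have "degree (Abs_poly f) = m"
  proof (rule antisym)
    show "degree (Abs_poly f) \<le> m" using assms co unfolding okP_def by (auto intro!: degree_le)
    show "m \<le> degree (Abs_poly f)" using assms co unfolding okP_def by (auto intro!: le_degree)
  qed
  then show deg: "degree (Abs_poly f) = m" .
  have sup: "\<forall>i\<ge>m+1. f i = 0" using assms unfolding okP_def by auto
  have Dsum: "(\<Sum>i\<le>m. f i * r_seq (k + i)) = D f k" for k
    using D_eq[OF sup, of k] by (simp add: lessThan_Suc_atMost)
  have lc: "lead_coeff (Abs_poly f) = 1" using deg co assms unfolding okP_def by simp
  show "is_char_poly (Abs_poly f) r_seq n" if "n \<le> 2*m"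
    unfolding is_char_poly_def deg co using lc Dsum assms that unfolding okP_def by auto
  show "\<not> is_char_poly (Abs_poly f) r_seq (Suc (2*m))"
    unfolding is_char_poly_def deg co using Dsum[of m] assms unfolding okP_def
    by (auto intro!: exI[of _ m])
qed

theorem corollary4:
  fixes n :: nat
  assumes "n \<ge> 1"
  shows "linear_complexity r_seq n = (n + 1) div 2"
proof -
  define L where "L = (n + 1) div 2"
  obtain f where f: "okP L f" using exists_PF by blast
  have up: "is_char_poly (Abs_poly f) r_seq n \<and> degree (Abs_poly f) = L"
    using okP_char(1)[OF f] okP_char(2)[OF f, of n] unfolding L_def by simp
  have low: "L \<le> degree c" if c: "is_char_poly c r_seq n" for c :: "bit poly"
  proof -
    obtain m where m: "n = 2*m+1 \<or> (n = 2*m+2)"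
    proof (cases n rule: par)
      case (1 a) then have "n = 2*(a-1)+2" using assms by simp
      then show ?thesis using that by blast
    next
      case (2 a) then show ?thesis using that by blast
    qed
    obtain g where g: "okP m g" using exists_PF by blast
    have c': "is_char_poly c r_seq (Suc (2*m))" using c m char_mono by fastforce
    have "degree c + m \<ge> Suc (2*m)"
      using massey[OF okP_char(2)[OF g, of "2*m"] okP_char(3)[OF g] c'] okP_char(1)[OF g] by simp
    then show ?thesis using m unfolding L_def by auto
  qed
  have "linear_complexity r_seq n = L"
    unfolding linear_complexity_def
  proof (rule Least_equality)
    show "\<exists>c. is_char_poly c r_seq n \<and> degree c = L" using up by blast
    show "\<And>y. \<exists>c. is_char_poly c r_seq n \<and> degree c = y \<Longrightarrow> L \<le> y" using low by blast
  qed
  then show ?thesis unfolding L_def .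
qed

end
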